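(* Let $M$ be an adequate monoid, $\chi:\Sigma\to M$ a function and $\tau$ the map defined below. Suppose $\mu:X\to Y$ is a morphism of idempotent $\Sigma$-trees. Then $\tau(Y)\tau(X)=\tau(Y)$ in $M$.
   Context: Adequate monoid: a monoid $M$ whose idempotents commute and in which every $\mathcal{L}^*$-class and every $\mathcal{R}^*$-class contains an idempotent, where $a\,\mathcal{L}^*\,b$ iff ($ax=ay\Leftrightarrow bx=by$ for all $x,y\in M$) and $a\,\mathcal{R}^*\,b$ iff ($xa=ya\Leftrightarrow xb=yb$ for all $x,y\in M$); $x^+$ and $x^*$ denote the unique idempotents $\mathcal{R}^*$- and $\mathcal{L}^*$-related to $x$. Trees: a $\Sigma$-tree is a finite directed graph whose underlying undirected graph is a tree, each edge $e$ having initial vertex $\alpha(e)$, terminal vertex $\omega(e)$ and label $\lambda(e)\in\Sigma$, with distinguished start and end vertices such that there is a (possibly empty) directed path from start to end vertex; it is idempotent if start vertex equals end vertex. A morphism $X\to Y$ maps vertices to vertices and edges to edges, preserving $\alpha$, $\omega$ and $\lambda$, and maps start/end vertex of $X$ to start/end vertex of $Y$. The map $\tau$ from idempotent trees to idempotents of $M$ is defined recursively on the number of edges: if $X$ has no edges, $\tau(X)=1$. Otherwise let $v$ be its start (= end) vertex; for an edge $e$ with $\alpha(e)=v$ let $X_e$ be the connected component of $X$ with edge $e$ removed containing $\omega(e)$, viewed as an idempotent tree with start and end vertex $\omega(e)$; for an edge $e$ with $\omega(e)=v$ let $X_e$ be the component of $X$ with $e$ removed containing $\alpha(e)$, viewed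 as an idempotent tree at $\alpha(e)$. Then $\tau(X)=\prod_{e:\alpha(e)=v}[\chi(\lambda(e))\tau(X_e)]^+\cdot\prod_{e:\omega(e)=v}[\tau(X_e)\chi(\lambda(e))]^*$ (a product of commuting idempotents, independent of order). *)

theory Defs
  imports Main
begin

definition Lstar :: "'m::monoid_mult \<Rightarrow> 'm \<Rightarrow> bool" where
  "Lstar a b \<longleftrightarrow> (\<forall>x y. a * x = a * y \<longleftrightarrow> b * x = b * y)"

definition Rstar :: "'m::monoid_mult \<Rightarrow> 'm \<Rightarrow> bool" where
  "Rstar a b \<longleftrightarrow> (\<forall>x y. x * a = y * a \<longleftrightarrow> x * b = y * b)"

definition idem :: "'m::monoid_mult \<Rightarrow> bool" where
  "idem e \<longleftrightarrow> e * e = e"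

class adequate_monoid = monoid_mult +
  assumes idem_commute: "e * e = e \<Longrightarrow> f * f = f \<Longrightarrow> e * f = f * e"
      and Lstar_class_idem: "\<exists>e. e * e = e \<and> (\<forall>x y. a * x = a * y \<longleftrightarrow> e * x = e * y)"
      and Rstar_class_idem: "\<exists>e. e * e = e \<and> (\<forall>x y. x * a = y * a \<longleftrightarrow> x * e = y * e)"

text \<open>x^+ and x^*: the unique idempotents R*- resp. L*-related to x.\<close>
definition plus_idem :: "'m::adequate_monoid \<Rightarrow> 'm" where
  "plus_idem x = (THE e. idem e \<and> Rstar x e)"

definition star_idem :: "'m::adequate_monoid \<Rightarrow> 'm" where
  "star_idem x = (THE e. idem e \<and> Lstar x e)"

text \<open>Product of a finite family indexed by a set, in an arbitrary enumeration order
  (used only for families of commuting idempotents, where it is order-independent).\<close>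
definition set_prod :: "('a \<Rightarrow> 'm::monoid_mult) \<Rightarrow> 'a set \<Rightarrow> 'm" where
  "set_prod f S = prod_list (map f (SOME l. distinct l \<and> set l = S))"

record ('v, 'e, 's) stree =
  verts :: "'v set"
  edges :: "'e set"
  src :: "'e \<Rightarrow> 'v"
  tgt :: "'e \<Rightarrow> 'v"
  lab :: "'e \<Rightarrow> 's"
  start :: 'v
  fin :: 'v

definition ulink :: "('v, 'e, 's) stree \<Rightarrow> 'e set \<Rightarrow> ('v \<times> 'v) set" where
  "ulink X D = {(src X d, tgt X d) | d. d \<in> edges X - D} \<union> {(tgt X d, src X d) | d. d \<in> edges X - D}"

definition dlink :: "('v, 'e, 's) stree \<Rightarrow> ('v \<times> 'v) set" where
  "dlink X = {(src X d, tgt X d) | d. d \<in> edges X}"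

text \<open>A Sigma-tree: finite directed graph whose underlying undirected graph is a tree
  (connected, and every edge is a bridge, i.e. no cycles), with start and end vertex
  joined by a (possibly empty) directed path.\<close>
definition is_tree :: "('v, 'e, 's) stree \<Rightarrow> bool" where
  "is_tree X \<longleftrightarrow> finite (verts X) \<and> finite (edges X)
     \<and> (\<forall>e\<in>edges X. src X e \<in> verts X \<and> tgt X e \<in> verts X)
     \<and> start X \<in> verts X \<and> fin X \<in> verts X
     \<and> (\<forall>w\<in>verts X. (start X, w) \<in> (ulink X {})\<^sup>*)
     \<and> (\<forall>e\<in>edges X. (src X e, tgt X e) \<notin> (ulink X {e})\<^sup>*)
     \<and> (start X, fin X) \<in> (dlink X)\<^sup>*"

definition idempotent_tree :: "('v, 'e, 's) stree \<Rightarrow> bool" where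
  "idempotent_tree X \<longleftrightarrow> is_tree X \<and> start X = fin X"

definition tree_morphism ::
  "('v1 \<Rightarrow> 'v2) \<Rightarrow> ('e1 \<Rightarrow> 'e2) \<Rightarrow> ('v1, 'e1, 's) stree \<Rightarrow> ('v2, 'e2, 's) stree \<Rightarrow> bool" where
  "tree_morphism mv me X Y \<longleftrightarrow>
     (\<forall>v\<in>verts X. mv v \<in> verts Y)
     \<and> (\<forall>e\<in>edges X. me e \<in> edges Y
          \<and> src Y (me e) = mv (src X e) \<and> tgt Y (me e) = mv (tgt X e)
          \<and> lab Y (me e) = lab X e)
     \<and> mv (start X) = start Y \<and> mv (fin X) = fin Y"

definition subtree :: "('v, 'e, 's) stree \<Rightarrow> 'e \<Rightarrow> 'v \<Rightarrow> ('v, 'e, 's) stree" where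
  "subtree X e u =
     (let C = {w \<in> verts X. (u, w) \<in> (ulink X {e})\<^sup>*} in
      X\<lparr> verts := C, edges := {d \<in> edges X - {e}. src X d \<in> C}, start := u, fin := u \<rparr>)"

text \<open>The map tau, by recursion on the number of edges (realised with fuel).\<close>
primrec tau_f :: "('s \<Rightarrow> 'm::adequate_monoid) \<Rightarrow> nat \<Rightarrow> ('v, 'e, 's) stree \<Rightarrow> 'm" where
  "tau_f chi 0 X = 1"
| "tau_f chi (Suc n) X =
     set_prod (\<lambda>e. plus_idem (chi (lab X e) * tau_f chi n (subtree X e (tgt X e))))
              {e \<in> edges X. src X e = start X}
   * set_prod (\<lambda>e. star_idem (tau_f chi n (subtree X e (src X e)) * chi (lab X e)))
              {e \<in> edges X. tgt X e = start X}"

definition tau :: "('s \<Rightarrow> 'm::adequate_monoid) \<Rightarrow> ('v, 'e, 's) stree \<Rightarrow> 'm" where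
  "tau chi X = tau_f chi (card (edges X)) X"

end

theory Submission
  imports Defs
begin


lemma plus_props:
  fixes x :: "'m::adequate_monoid"
  shows "plus_idem x * plus_idem x = plus_idem x \<and> (\<forall>a b. a * x = b * x \<longleftrightarrow> a * plus_idem x = b * plus_idem x)"
proof -
  obtain e :: 'm where e: "e * e = e" "\<forall>a b. a * x = b * x \<longleftrightarrow> a * e = b * e"
    using Rstar_class_idem by blast
  have uniq: "e' = e" if "idem e'" "Rstar x e'" for e'
  proof -
    have e'1: "e' * e' = e'" using that by (simp add: idem_def)
    have r: "\<forall>a b. a * x = b * x \<longleftrightarrow> a * e' = b * e'" using that by (simp add: Rstar_def)
    have "e' * x = 1 * x" using r e'1 by (metis mult_1_left)
    hence "e' * e = e" using e by (metis mult_1_left)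
    have "e * x = 1 * x" using e by (metis mult_1_left)
    hence "e * e' = e'" using r by (metis mult_1_left)
    show ?thesis using \<open>e' * e = e\<close> \<open>e * e' = e'\<close> idem_commute[OF e(1) e'1] by simp
  qed
  have "plus_idem x = e" unfolding plus_idem_def
    apply (rule the_equality)
    using e apply (simp add: idem_def Rstar_def)
    using uniq by blast
  thus ?thesis using e by simp
qed

lemma star_props:
  fixes x :: "'m::adequate_monoid"
  shows "star_idem x * star_idem x = star_idem x \<and> (\<forall>a b. x * a = x * b \<longleftrightarrow> star_idem x * a = star_idem x * b)"
proof -
  obtain e :: 'm where e: "e * e = e" "\<forall>a b. x * a = x * b \<longleftrightarrow> e * a = e * b"
    using Lstar_class_idem by blast
  have uniq: "e' = e" if "idem e'" "Lstar x e'" for e'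
  proof -
    have e'1: "e' * e' = e'" using that by (simp add: idem_def)
    have r: "\<forall>a b. x * a = x * b \<longleftrightarrow> e' * a = e' * b" using that by (simp add: Lstar_def)
    have "x * e' = x * 1" using r e'1 by (metis mult_1_right)
    hence "e * e' = e" using e by (metis mult_1_right)
    have "x * e = x * 1" using e by (metis mult_1_right)
    hence "e' * e = e'" using r by (metis mult_1_right)
    show ?thesis using \<open>e' * e = e'\<close> \<open>e * e' = e\<close> idem_commute[OF e(1) e'1] by simp
  qed
  have "star_idem x = e" unfolding star_idem_def
    apply (rule the_equality)
    using e apply (simp add: idem_def Lstar_def)
    using uniq by blast
  thus ?thesis using e by simp
qed

lemma plus_idem_idem: "plus_idem x * plus_idem (x::'m::adequate_monoid) = plus_idem x"
  using plus_props by blast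
lemma star_idem_idem: "star_idem x * star_idem (x::'m::adequate_monoid) = star_idem x"
  using star_props by blast
lemma plus_R: "a * x = b * x \<Longrightarrow> a * plus_idem x = b * plus_idem (x::'m::adequate_monoid)"
  using plus_props by blast
lemma plus_R': "a * plus_idem x = b * plus_idem x \<Longrightarrow> a * x = b * (x::'m::adequate_monoid)"
  using plus_props by blast
lemma star_L: "x * a = x * b \<Longrightarrow> star_idem x * a = star_idem (x::'m::adequate_monoid) * b"
  using star_props by blast
lemma star_L': "star_idem x * a = star_idem x * b \<Longrightarrow> x * a = (x::'m::adequate_monoid) * b"
  using star_props by blast

lemma P1: "plus_idem x * x = (x::'m::adequate_monoid)"
proof -
  have "plus_idem x * plus_idem x = 1 * plus_idem x" using plus_idem_idem by simp
  hence "plus_idem x * x = 1 * x" by (rule plus_R')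
  thus ?thesis by simp
qed
lemma S1: "x * star_idem x = (x::'m::adequate_monoid)"
proof -
  have "star_idem x * star_idem x = star_idem x * 1" using star_idem_idem by simp
  hence "x * star_idem x = x * 1" by (rule star_L')
  thus ?thesis by simp
qed

lemma idem_prod: assumes "e*e=(e::'m::monoid_mult)" "f*f=f" "e*f=f*e" shows "(e*f)*(e*f) = e*f"
proof -
  have "(e*f)*(e*f) = e*((f*e)*f)" by (simp add: mult.assoc)
  also have "... = e*((e*f)*f)" using assms(3) by simp
  also have "... = (e*e)*(f*f)" by (simp add: mult.assoc)
  also have "... = e*f" using assms by simp
  finally show ?thesis .
qed

lemma P2: assumes "e * e = (e::'m::adequate_monoid)" shows "plus_idem (e * x) = e * plus_idem x"
proof -
  let ?p = "plus_idem (e*x)" and ?q = "e * plus_idem x"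
  have c: "e * plus_idem x = plus_idem x * e" using idem_commute[OF assms plus_idem_idem] .
  have qi: "?q * ?q = ?q" using idem_prod[OF assms plus_idem_idem c] .
  have "?q * (e * x) = e * ((plus_idem x * e) * x)" by (simp add: mult.assoc)
  also have "... = e * ((e * plus_idem x) * x)" using c by simp
  also have "... = (e * e) * (plus_idem x * x)" by (simp add: mult.assoc)
  also have "... = e * x" using assms P1[of x] by simp
  finally have "?q * (e * x) = 1 * (e * x)" by simp
  hence a: "?q * ?p = ?p" using plus_R[of ?q "e*x" 1] by simp
  have "(?p * e) * x = 1 * (e * x)" using P1[of "e*x"] by (simp add: mult.assoc)
  hence "(?p * e) * x = e * x" by simp
  hence "(?p * e) * plus_idem x = e * plus_idem x" by (rule plus_R)
  hence b: "?p * ?q = ?q" by (simp add: mult.assoc)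
  have "?p = ?q * ?p" using a by simp
  also have "... = ?p * ?q" using idem_commute[OF plus_idem_idem qi] by simp
  also have "... = ?q" using b by simp
  finally show ?thesis .
qed

lemma S2: assumes "e * e = (e::'m::adequate_monoid)" shows "star_idem (x * e) = star_idem x * e"
proof -
  let ?p = "star_idem (x*e)" and ?q = "star_idem x * e"
  have c: "star_idem x * e = e * star_idem x" using idem_commute[OF star_idem_idem assms] .
  have qi: "?q * ?q = ?q" using idem_prod[OF star_idem_idem assms c] .
  have "(x * e) * ?q = x * ((e * star_idem x) * e)" by (simp add: mult.assoc)
  also have "... = x * ((star_idem x * e) * e)" using c by simp
  also have "... = (x * star_idem x) * (e * e)" by (simp add: mult.assoc)
  also have "... = x * e" using assms S1[of x] by simp
  finally have "(x * e) * ?q = (x * e) * 1" by simp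
  hence a: "?p * ?q = ?p" using star_L[of "x*e" ?q 1] by simp
  have "x * (e * ?p) = (x * e) * 1" using S1[of "x*e"] by (simp add: mult.assoc)
  hence "x * (e * ?p) = x * e" by simp
  hence "star_idem x * (e * ?p) = star_idem x * e" by (rule star_L)
  hence b: "?q * ?p = ?q" by (simp add: mult.assoc)
  have "?p = ?p * ?q" using a by simp
  also have "... = ?q * ?p" using idem_commute[OF star_idem_idem qi] by simp
  also have "... = ?q" using b by simp
  finally show ?thesis .
qed

lemma P3: "plus_idem (x * y) * plus_idem x = plus_idem ((x::'m::adequate_monoid) * y)"
proof -
  have "plus_idem x * (x * y) = 1 * (x * y)" using P1[of x] by (simp add: mult.assoc[symmetric])
  hence "plus_idem x * plus_idem (x*y) = plus_idem (x*y)" using plus_R by fastforce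
  thus ?thesis using idem_commute[OF plus_idem_idem plus_idem_idem] by metis
qed

lemma S3: "star_idem (y * x) * star_idem x = star_idem (y * (x::'m::adequate_monoid))"
proof -
  have "(y * x) * star_idem x = (y * x) * 1" using S1[of x] by (simp add: mult.assoc)
  thus ?thesis using star_L by fastforce
qed



lemma prod_list_idem:
  assumes "\<And>y. f y * f y = (f y::'m::adequate_monoid)"
  shows "prod_list (map f l) * prod_list (map f l) = prod_list (map f l)"
proof (induction l)
  case Nil then show ?case by simp
next
  case (Cons a l)
  have c: "f a * prod_list (map f l) = prod_list (map f l) * f a"
    using idem_commute[OF assms Cons.IH] .
  show ?case using idem_prod[OF assms Cons.IH c] by simp
qed

lemma prod_move:
  assumes "\<And>y. f y * f y = (f y::'m::adequate_monoid)" "y \<in> set l"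
  shows "prod_list (map f l) = f y * prod_list (map f (remove1 y l))"
  using assms(2)
proof (induction l)
  case Nil then show ?case by simp
next
  case (Cons a l)
  show ?case
  proof (cases "a = y")
    case True then show ?thesis by simp
  next
    case False
    hence "y \<in> set l" using Cons.prems by simp
    hence "prod_list (map f (a # l)) = f a * (f y * prod_list (map f (remove1 y l)))"
      using Cons.IH by simp
    also have "... = (f a * f y) * prod_list (map f (remove1 y l))" by (simp add: mult.assoc)
    also have "... = (f y * f a) * prod_list (map f (remove1 y l))"
    proof -
      have "f a * f y = f y * f a" by (rule idem_commute[OF assms(1) assms(1)])
      thus ?thesis by simp
    qed
    also have "... = f y * prod_list (map f (remove1 y (a # l)))" using False by (simp add: mult.assoc)
    finally show ?thesis .
  qed
qed

lemma prod_perm: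
  assumes "\<And>y. f y * f y = (f y::'m::adequate_monoid)"
  shows "distinct l1 \<Longrightarrow> distinct l2 \<Longrightarrow> set l1 = set l2 \<Longrightarrow> prod_list (map f l1) = prod_list (map f l2)"
proof (induction l1 arbitrary: l2)
  case Nil then show ?case by simp
next
  case (Cons a l1)
  have a: "a \<in> set l2" using Cons.prems by auto
  have "prod_list (map f l2) = f a * prod_list (map f (remove1 a l2))" using prod_move[OF assms a] .
  moreover have "prod_list (map f l1) = prod_list (map f (remove1 a l2))"
  proof (rule Cons.IH)
    show "distinct l1" using Cons.prems by simp
    show "distinct (remove1 a l2)" using Cons.prems by simp
    show "set l1 = set (remove1 a l2)" using Cons.prems by (auto simp add: set_remove1_eq)
  qed
  ultimately show ?case by simp
qed

lemma set_prod_eq: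
  assumes "\<And>y. f y * f y = (f y::'m::adequate_monoid)" "distinct l" "set l = S"
  shows "set_prod f S = prod_list (map f l)"
proof -
  have ex: "\<exists>l. distinct l \<and> set l = S" using assms by blast
  let ?l = "SOME l. distinct l \<and> set l = S"
  have "distinct ?l \<and> set ?l = S" using someI_ex[OF ex] .
  hence "prod_list (map f ?l) = prod_list (map f l)"
    using prod_perm[OF assms(1), of ?l l] assms(2,3) by simp
  thus ?thesis unfolding set_prod_def .
qed

lemma set_prod_empty: "set_prod f {} = (1::'m::monoid_mult)"
proof -
  have "(SOME l. distinct l \<and> set l = {}) = []" by (rule some_equality) auto
  thus ?thesis unfolding set_prod_def by (subst \<open>(SOME l. distinct l \<and> set l = {}) = []\<close>) simp
qed

lemma set_prod_insert:
  assumes "\<And>y. f y * f y = (f y::'m::adequate_monoid)" "finite S" "x \<notin> S"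
  shows "set_prod f (insert x S) = f x * set_prod f S"
proof -
  obtain l where l: "distinct l" "set l = S" using finite_distinct_list[OF assms(2)] by blast
  have "set_prod f (insert x S) = prod_list (map f (x # l))"
    by (rule set_prod_eq[OF assms(1)]) (use l assms(3) in auto)
  also have "... = f x * set_prod f S" using set_prod_eq[OF assms(1) l] by simp
  finally show ?thesis .
qed

lemma set_prod_idem:
  assumes "\<And>y. f y * f y = (f y::'m::adequate_monoid)"
  shows "set_prod f S * set_prod f S = set_prod f S"
  unfolding set_prod_def using prod_list_idem[of f] assms by blast

lemma set_prod_cong:
  assumes "finite S" "\<And>x. x \<in> S \<Longrightarrow> f x = g x"
  shows "set_prod f S = (set_prod g S :: 'm::monoid_mult)"
proof -
  have ex: "\<exists>l. distinct l \<and> set l = S" using finite_distinct_list[OF assms(1)] by blast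
  let ?l = "SOME l. distinct l \<and> set l = S"
  have "set ?l = S" using someI_ex[OF ex] by blast
  hence "\<forall>x\<in>set ?l. f x = g x" using assms(2) by auto
  hence "map f ?l = map g ?l" using map_eq_conv[of f ?l g] by blast
  thus ?thesis unfolding set_prod_def by (rule arg_cong)
qed

lemma list_absorb: "(\<forall>x\<in>set l. P * f x = P) \<Longrightarrow> P * prod_list (map f l) = (P :: 'm::monoid_mult)"
proof (induction l)
  case Nil then show ?case by simp
next
  case (Cons a l)
  have "P * prod_list (map f (a # l)) = (P * f a) * prod_list (map f l)" by (simp add: mult.assoc)
  also have "... = P" using Cons by simp
  finally show ?case .
qed

lemma set_prod_absorb:
  assumes "finite S" "\<And>x. x \<in> S \<Longrightarrow> P * f x = P"
  shows "P * set_prod f S = (P :: 'm::monoid_mult)"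
proof -
  have ex: "\<exists>l. distinct l \<and> set l = S" using finite_distinct_list[OF assms(1)] by blast
  let ?l = "SOME l. distinct l \<and> set l = S"
  have "set ?l = S" using someI_ex[OF ex] by blast
  hence "\<forall>x\<in>set ?l. P * f x = P" using assms(2) by auto
  thus ?thesis unfolding set_prod_def by (rule list_absorb)
qed



lemma tau_f_idem: "tau_f chi n Z * tau_f chi n Z = (tau_f chi n Z :: 'm::adequate_monoid)"
proof (induction n arbitrary: Z)
  case 0 then show ?case by simp
next
  case (Suc n)
  let ?A = "set_prod (\<lambda>e. plus_idem (chi (lab Z e) * tau_f chi n (subtree Z e (tgt Z e))))
              {e \<in> edges Z. src Z e = start Z}"
  let ?B = "set_prod (\<lambda>e. star_idem (tau_f chi n (subtree Z e (src Z e)) * chi (lab Z e)))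
              {e \<in> edges Z. tgt Z e = start Z}"
  have a: "?A * ?A = ?A" by (rule set_prod_idem) (rule plus_idem_idem)
  have b: "?B * ?B = ?B" by (rule set_prod_idem) (rule star_idem_idem)
  show ?case using idem_prod[OF a b idem_commute[OF a b]] by simp
qed

lemma tau_idem: "tau chi Z * tau chi Z = (tau chi Z :: 'm::adequate_monoid)"
  unfolding tau_def by (rule tau_f_idem)

lemma subtree_edges: "edges (subtree X e u) \<subseteq> edges X - {e}"
  by (auto simp: subtree_def Let_def)

lemma subtree_card:
  assumes "finite (edges X)" "e \<in> edges X"
  shows "finite (edges (subtree X e u)) \<and> card (edges (subtree X e u)) < card (edges X)"
proof -
  have s: "edges (subtree X e u) \<subseteq> edges X - {e}" by (rule subtree_edges)
  hence f: "finite (edges (subtree X e u))" using assms(1) finite_subset by blast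
  have "card (edges (subtree X e u)) \<le> card (edges X - {e})" using s assms(1) by (simp add: card_mono)
  also have "... < card (edges X)" by (rule card_Diff1_less[OF assms])
  finally show ?thesis using f by simp
qed

lemma fuel_gen:
  "finite (edges Z) \<Longrightarrow> card (edges Z) \<le> n \<Longrightarrow> card (edges Z) \<le> m \<Longrightarrow>
   tau_f chi n Z = (tau_f chi m Z :: 'm::adequate_monoid)"
proof (induction n arbitrary: Z m)
  case 0
  hence E: "edges Z = {}" by simp
  show ?case
  proof (cases m)
    case 0 then show ?thesis by simp
  next
    case (Suc m') then show ?thesis using E by (simp add: set_prod_empty)
  qed
next
  case (Suc n)
  show ?case
  proof (cases m)
    case 0
    hence E: "edges Z = {}" using Suc.prems by simp
    show ?thesis using E 0 by (simp add: set_prod_empty)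
  next
    case (Suc m')
    have IH: "tau_f chi n (subtree Z e u) = tau_f chi m' (subtree Z e u)" if "e \<in> edges Z" for e u
    proof -
      have "finite (edges (subtree Z e u)) \<and> card (edges (subtree Z e u)) < card (edges Z)"
        using subtree_card[OF Suc.prems(1) that] .
      thus ?thesis using Suc.IH Suc.prems \<open>m = Suc m'\<close> by simp
    qed
    have fin1: "finite {e \<in> edges Z. src Z e = start Z}" using Suc.prems(1) by simp
    have fin2: "finite {e \<in> edges Z. tgt Z e = start Z}" using Suc.prems(1) by simp
    show ?thesis unfolding \<open>m = Suc m'\<close> tau_f.simps
      apply (rule arg_cong2[where f="(*)"])
       apply (rule set_prod_cong[OF fin1]) using IH apply simp
      apply (rule set_prod_cong[OF fin2]) using IH apply simp
      done
  qed
qed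

lemma fuel: "finite (edges Z) \<Longrightarrow> card (edges Z) \<le> n \<Longrightarrow> tau_f chi n Z = (tau chi Z :: 'm::adequate_monoid)"
  unfolding tau_def using fuel_gen by blast

definition Fo :: "('s \<Rightarrow> 'm::adequate_monoid) \<Rightarrow> ('v, 'e, 's) stree \<Rightarrow> 'e \<Rightarrow> 'm" where
  "Fo chi Z d = plus_idem (chi (lab Z d) * tau chi (subtree Z d (tgt Z d)))"
definition Fi :: "('s \<Rightarrow> 'm::adequate_monoid) \<Rightarrow> ('v, 'e, 's) stree \<Rightarrow> 'e \<Rightarrow> 'm" where
  "Fi chi Z d = star_idem (tau chi (subtree Z d (src Z d)) * chi (lab Z d))"

lemma Fo_idem: "Fo chi Z d * Fo chi Z d = Fo chi Z d"
  unfolding Fo_def by (rule plus_idem_idem)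
lemma Fi_idem: "Fi chi Z d * Fi chi Z d = Fi chi Z d"
  unfolding Fi_def by (rule star_idem_idem)

lemma tau_unfold:
  assumes "finite (edges Z)"
  shows "tau chi Z = set_prod (Fo chi Z) {d \<in> edges Z. src Z d = start Z}
                    * set_prod (Fi chi Z) {d \<in> edges Z. tgt Z d = start Z}"
proof (cases "card (edges Z)")
  case 0
  hence E: "edges Z = {}" using assms by simp
  show ?thesis unfolding tau_def using 0 E by (simp add: set_prod_empty)
next
  case (Suc n)
  have IH: "tau_f chi n (subtree Z e u) = tau chi (subtree Z e u)" if "e \<in> edges Z" for e u
  proof -
    have "finite (edges (subtree Z e u)) \<and> card (edges (subtree Z e u)) < card (edges Z)"
      using subtree_card[OF assms that] .
    thus ?thesis using Suc by (intro fuel) auto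
  qed
  have fin1: "finite {e \<in> edges Z. src Z e = start Z}" using assms by simp
  have fin2: "finite {e \<in> edges Z. tgt Z e = start Z}" using assms by simp
  show ?thesis unfolding tau_def Suc tau_f.simps
    apply (rule arg_cong2[where f="(*)"])
     apply (rule set_prod_cong[OF fin1]) using IH apply (simp add: Fo_def)
    apply (rule set_prod_cong[OF fin2]) using IH apply (simp add: Fi_def)
    done
qed

lemma subtree_reroot: "subtree (Z\<lparr>start := a, fin := b\<rparr>) d u = subtree Z d u"
  by (simp add: subtree_def ulink_def Let_def)

lemma Fo_reroot: "Fo chi (Z\<lparr>start := a, fin := b\<rparr>) = Fo chi Z"
  by (rule ext) (simp add: Fo_def subtree_reroot)
lemma Fi_reroot: "Fi chi (Z\<lparr>start := a, fin := b\<rparr>) = Fi chi Z"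
  by (rule ext) (simp add: Fi_def subtree_reroot)



lemma ulink_sym: "(a,b) \<in> ulink X D \<Longrightarrow> (b,a) \<in> ulink X D"
  by (auto simp: ulink_def)

lemma rt_sym: "(a,b) \<in> (ulink X D)\<^sup>* \<Longrightarrow> (b,a) \<in> (ulink X D)\<^sup>*"
proof (induction rule: rtrancl_induct)
  case base then show ?case by simp
next
  case (step y z)
  show ?case by (rule converse_rtrancl_into_rtrancl[OF ulink_sym[OF step(2)] step(3)])
qed

lemma ulink_mono: "D \<subseteq> D' \<Longrightarrow> ulink X D' \<subseteq> ulink X D"
  by (auto simp: ulink_def)

lemma link_edge: "d \<in> edges X \<Longrightarrow> d \<notin> D \<Longrightarrow> (src X d, tgt X d) \<in> ulink X D \<and> (tgt X d, src X d) \<in> ulink X D"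
  by (auto simp: ulink_def)

lemma ulink_elim: "(a,b) \<in> ulink X D \<Longrightarrow> \<exists>d\<in>edges X - D. (a = src X d \<and> b = tgt X d) \<or> (a = tgt X d \<and> b = src X d)"
  by (auto simp: ulink_def)

lemma ulink_sub: "edges A \<subseteq> edges B \<Longrightarrow> src A = src B \<Longrightarrow> tgt A = tgt B \<Longrightarrow> ulink A D \<subseteq> ulink B D"
  by (auto simp: ulink_def)

lemma ulink_reroot: "ulink (Z\<lparr>start := a, fin := b\<rparr>) D = ulink Z D"
  by (simp add: ulink_def)

lemma subtree_simps:
  "verts (subtree X e u) = {w \<in> verts X. (u, w) \<in> (ulink X {e})\<^sup>*}"
  "edges (subtree X e u) = {d \<in> edges X - {e}. src X d \<in> verts X \<and> (u, src X d) \<in> (ulink X {e})\<^sup>*}"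
  "src (subtree X e u) = src X" "tgt (subtree X e u) = tgt X" "lab (subtree X e u) = lab X"
  "start (subtree X e u) = u" "fin (subtree X e u) = u"
  by (simp_all add: subtree_def Let_def)

lemma tree_D:
  assumes "is_tree X"
  shows "finite (verts X)" "finite (edges X)"
    "\<And>e. e \<in> edges X \<Longrightarrow> src X e \<in> verts X" "\<And>e. e \<in> edges X \<Longrightarrow> tgt X e \<in> verts X"
    "start X \<in> verts X" "\<And>w. w \<in> verts X \<Longrightarrow> (start X, w) \<in> (ulink X {})\<^sup>*"
    "\<And>e. e \<in> edges X \<Longrightarrow> (src X e, tgt X e) \<notin> (ulink X {e})\<^sup>*"
proof -
  note h = assms[unfolded is_tree_def]
  show "finite (verts X)" using h by blast
  show "finite (edges X)" using h by blast
  show "\<And>e. e \<in> edges X \<Longrightarrow> src X e \<in> verts X" using h by blast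
  show "\<And>e. e \<in> edges X \<Longrightarrow> tgt X e \<in> verts X" using h by blast
  show "start X \<in> verts X" using h by blast
  show "\<And>w. w \<in> verts X \<Longrightarrow> (start X, w) \<in> (ulink X {})\<^sup>*" using h by blast
  show "\<And>e. e \<in> edges X \<Longrightarrow> (src X e, tgt X e) \<notin> (ulink X {e})\<^sup>*" using h by blast
qed

lemma bridge:
  assumes "is_tree X" "g \<in> edges X"
  shows "(src X g, tgt X g) \<notin> (ulink X {g})\<^sup>*" "(tgt X g, src X g) \<notin> (ulink X {g})\<^sup>*"
    "src X g \<noteq> tgt X g"
proof -
  show a: "(src X g, tgt X g) \<notin> (ulink X {g})\<^sup>*" using tree_D(7)[OF assms] .
  show "(tgt X g, src X g) \<notin> (ulink X {g})\<^sup>*"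
  proof
    assume "(tgt X g, src X g) \<in> (ulink X {g})\<^sup>*"
    from rt_sym[OF this] a show False by contradiction
  qed
  show "src X g \<noteq> tgt X g"
  proof
    assume "src X g = tgt X g"
    hence "(src X g, tgt X g) \<in> (ulink X {g})\<^sup>*" by (simp only: rtrancl.rtrancl_refl)
    with a show False by contradiction
  qed
qed

lemma subtree_tree:
  assumes X: "is_tree X" and e: "e \<in> edges X" and u: "u \<in> verts X"
  shows "idempotent_tree (subtree X e u)"
proof -
  let ?S = "subtree X e u"
  let ?L = "ulink X {e}"
  have conn: "(u, w) \<in> (ulink ?S {})\<^sup>*" if "(u, w) \<in> ?L\<^sup>*" for w
    using that
  proof (induction rule: rtrancl_induct)
    case base then show ?case by simp
  next
    case (step y z)
    obtain d where d: "d \<in> edges X - {e}" "(y = src X d \<and> z = tgt X d) \<or> (y = tgt X d \<and> z = src X d)"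
      using ulink_elim[OF step.hyps(2)] by blast
    have uz: "(u, z) \<in> ?L\<^sup>*" using step.hyps by simp
    have "(u, src X d) \<in> ?L\<^sup>*" using d(2) step.hyps(1) uz by auto
    moreover have "src X d \<in> verts X" using tree_D(3)[OF X] d(1) by blast
    ultimately have "d \<in> edges ?S" using d(1) by (simp add: subtree_simps)
    hence "(y, z) \<in> ulink ?S {}" using link_edge[of d ?S "{}"] d(2) by (auto simp: subtree_simps)
    then show ?case using step.IH by simp
  qed
  have "is_tree ?S"
    unfolding is_tree_def
  proof (intro conjI ballI)
    show "finite (verts ?S)" using tree_D(1)[OF X] by (simp add: subtree_simps)
    show "finite (edges ?S)" using tree_D(2)[OF X] by (simp add: subtree_simps)
    fix d assume d: "d \<in> edges ?S"
    hence d': "d \<in> edges X" "d \<noteq> e" "src X d \<in> verts X" "(u, src X d) \<in> ?L\<^sup>*" by (auto simp: subtree_simps)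
    show "src ?S d \<in> verts ?S" using d' by (simp add: subtree_simps)
    have "(src X d, tgt X d) \<in> ?L" using link_edge[of d X "{e}"] d' by blast
    hence "(u, tgt X d) \<in> ?L\<^sup>*" using d'(4) by (meson rtrancl.rtrancl_into_rtrancl)
    thus "tgt ?S d \<in> verts ?S" using tree_D(4)[OF X d'(1)] by (simp add: subtree_simps)
    have "ulink ?S {d} \<subseteq> ulink X {d}" by (rule ulink_sub) (auto simp: subtree_simps)
    hence "(ulink ?S {d})\<^sup>* \<subseteq> (ulink X {d})\<^sup>*" by (rule rtrancl_mono)
    thus "(src ?S d, tgt ?S d) \<notin> (ulink ?S {d})\<^sup>*" using tree_D(7)[OF X d'(1)] by (auto simp: subtree_simps)
  next
    show "start ?S \<in> verts ?S" using u by (simp add: subtree_simps)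
    show "fin ?S \<in> verts ?S" using u by (simp add: subtree_simps)
    show "(start ?S, fin ?S) \<in> (dlink ?S)\<^sup>*" by (simp add: subtree_simps)
  next
    fix w assume "w \<in> verts ?S"
    thus "(start ?S, w) \<in> (ulink ?S {})\<^sup>*" using conn by (simp add: subtree_simps)
  qed
  thus ?thesis by (simp add: idempotent_tree_def subtree_simps)
qed

lemma reroot_tree:
  assumes Y: "is_tree Y" and w: "w \<in> verts Y"
  shows "idempotent_tree (Y\<lparr>start := w, fin := w\<rparr>)"
proof -
  let ?Z = "Y\<lparr>start := w, fin := w\<rparr>"
  have c: "(w, z) \<in> (ulink Y {})\<^sup>*" if "z \<in> verts Y" for z
  proof -
    have "(w, start Y) \<in> (ulink Y {})\<^sup>*" using rt_sym[OF tree_D(6)[OF Y w]] .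
    thus ?thesis using tree_D(6)[OF Y that] by simp
  qed
  have "is_tree ?Z" unfolding is_tree_def
  proof (intro conjI ballI)
    show "finite (verts ?Z)" using tree_D(1)[OF Y] by simp
    show "finite (edges ?Z)" using tree_D(2)[OF Y] by simp
    fix d assume d: "d \<in> edges ?Z"
    show "src ?Z d \<in> verts ?Z" using tree_D(3)[OF Y] d by simp
    show "tgt ?Z d \<in> verts ?Z" using tree_D(4)[OF Y] d by simp
    show "(src ?Z d, tgt ?Z d) \<notin> (ulink ?Z {d})\<^sup>*" using tree_D(7)[OF Y] d by (simp add: ulink_reroot)
  next
    show "start ?Z \<in> verts ?Z" using w by simp
    show "fin ?Z \<in> verts ?Z" using w by simp
    show "(start ?Z, fin ?Z) \<in> (dlink ?Z)\<^sup>*" by simp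
  next
    fix z assume "z \<in> verts ?Z"
    thus "(start ?Z, z) \<in> (ulink ?Z {})\<^sup>*" using c by (simp add: ulink_reroot)
  qed
  thus ?thesis by (simp add: idempotent_tree_def)
qed

lemma morph_sub:
  assumes M: "tree_morphism mv me X Y" and u: "u \<in> verts X"
  shows "tree_morphism mv me (subtree X e u) (Y\<lparr>start := mv u, fin := mv u\<rparr>)"
proof -
  have m1: "\<forall>v\<in>verts X. mv v \<in> verts Y" and
       m2: "\<forall>e\<in>edges X. me e \<in> edges Y \<and> src Y (me e) = mv (src X e) \<and> tgt Y (me e) = mv (tgt X e)
          \<and> lab Y (me e) = lab X e"
    using M unfolding tree_morphism_def by blast+
  have "verts (subtree X e u) \<subseteq> verts X" "edges (subtree X e u) \<subseteq> edges X"
    by (auto simp: subtree_simps)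
  thus ?thesis unfolding tree_morphism_def using m1 m2 by (auto simp: subtree_simps)
qed



lemma subtree_more: "stree.more (subtree X e u) = stree.more X"
  by (simp add: subtree_def Let_def)

lemma SS:
  assumes Y: "is_tree Y" and f: "f \<in> edges Y" and g: "g \<in> edges Y" and gf: "g \<noteq> f"
    and z: "z = src Y f \<or> z = tgt Y f"
    and zx: "(z = src Y g \<and> x = tgt Y g) \<or> (z = tgt Y g \<and> x = src Y g)"
  shows "subtree (subtree Y f z) g x = subtree Y g x"
proof -
  let ?L = "ulink Y"
  let ?Y1 = "subtree Y f z"
  have notK: "(x, z) \<notin> (?L {g})\<^sup>*" using bridge(1,2)[OF Y g] zx by auto
  have zx_link: "(z, x) \<in> ?L {f}" using link_edge[OF g, of "{f}"] gf zx by auto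
  have c1: "(x, y) \<in> (?L {g,f})\<^sup>*" if "(x,y) \<in> (?L {g})\<^sup>*" for y
    using that
  proof (induction rule: rtrancl_induct)
    case base show ?case by simp
  next
    case (step y y')
    obtain d where d: "d \<in> edges Y - {g}" "(y = src Y d \<and> y' = tgt Y d) \<or> (y = tgt Y d \<and> y' = src Y d)"
      using ulink_elim[OF step.hyps(2)] by blast
    have xy': "(x, y') \<in> (?L {g})\<^sup>*" using step.hyps by (meson rtrancl.rtrancl_into_rtrancl)
    have "d \<noteq> f"
    proof
      assume "d = f"
      hence "z = y \<or> z = y'" using d(2) z by auto
      hence "(x,z) \<in> (?L {g})\<^sup>*" using step.hyps(1) xy' by auto
      thus False using notK by contradiction
    qed
    hence "(y,y') \<in> ?L {g,f}" using d link_edge[of d Y "{g,f}"] by auto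
    thus ?case using step.IH by (meson rtrancl.rtrancl_into_rtrancl)
  qed
  have c2: "(z, y) \<in> (?L {f})\<^sup>*" if "(x,y) \<in> (?L {g,f})\<^sup>*" for y
  proof -
    have "?L {g,f} \<subseteq> ?L {f}" by (rule ulink_mono) auto
    hence "(?L {g,f})\<^sup>* \<subseteq> (?L {f})\<^sup>*" by (rule rtrancl_mono)
    hence "(x,y) \<in> (?L {f})\<^sup>*" using that by blast
    thus ?thesis using zx_link by (meson converse_rtrancl_into_rtrancl)
  qed
  have c3: "(x, y) \<in> (ulink ?Y1 {g})\<^sup>*" if "(x,y) \<in> (?L {g,f})\<^sup>*" for y
    using that
  proof (induction rule: rtrancl_induct)
    case base show ?case by simp
  next
    case (step y y')
    obtain d where d: "d \<in> edges Y - {g,f}" "(y = src Y d \<and> y' = tgt Y d) \<or> (y = tgt Y d \<and> y' = src Y d)"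
      using ulink_elim[OF step.hyps(2)] by blast
    have "(x, y') \<in> (?L {g,f})\<^sup>*" using step.hyps by (meson rtrancl.rtrancl_into_rtrancl)
    hence "(z, y') \<in> (?L{f})\<^sup>*" "(z,y) \<in> (?L{f})\<^sup>*" using c2 step.hyps(1) by auto
    hence "(z, src Y d) \<in> (?L {f})\<^sup>*" using d(2) by auto
    moreover have "src Y d \<in> verts Y" using tree_D(3)[OF Y] d(1) by blast
    ultimately have "d \<in> edges ?Y1" using d(1) by (simp add: subtree_simps)
    hence "(y, y') \<in> ulink ?Y1 {g}" using link_edge[of d ?Y1 "{g}"] d by (auto simp: subtree_simps)
    thus ?case using step.IH by (meson rtrancl.rtrancl_into_rtrancl)
  qed
  have "ulink ?Y1 {g} \<subseteq> ?L {g}" by (rule ulink_sub) (auto simp: subtree_simps)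
  hence c4: "(ulink ?Y1 {g})\<^sup>* \<subseteq> (?L {g})\<^sup>*" by (rule rtrancl_mono)
  have V: "verts (subtree ?Y1 g x) = verts (subtree Y g x)"
  proof
    show "verts (subtree ?Y1 g x) \<subseteq> verts (subtree Y g x)" using c4 by (auto simp: subtree_simps)
    show "verts (subtree Y g x) \<subseteq> verts (subtree ?Y1 g x)"
    proof
      fix w assume "w \<in> verts (subtree Y g x)"
      hence w: "w \<in> verts Y" "(x,w) \<in> (?L {g})\<^sup>*" by (auto simp: subtree_simps)
      have w2: "(x,w) \<in> (?L {g,f})\<^sup>*" using c1 w(2) .
      have "(z,w) \<in> (?L {f})\<^sup>*" using c2 w2 .
      moreover have "(x,w) \<in> (ulink ?Y1 {g})\<^sup>*" using c3 w2 .
      ultimately show "w \<in> verts (subtree ?Y1 g x)" using w(1) by (simp add: subtree_simps)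
    qed
  qed
  have Ed: "edges (subtree ?Y1 g x) = edges (subtree Y g x)"
  proof
    show "edges (subtree ?Y1 g x) \<subseteq> edges (subtree Y g x)" using c4 by (auto simp: subtree_simps)
    show "edges (subtree Y g x) \<subseteq> edges (subtree ?Y1 g x)"
    proof
      fix d assume "d \<in> edges (subtree Y g x)"
      hence d: "d \<in> edges Y" "d \<noteq> g" "src Y d \<in> verts Y" "(x, src Y d) \<in> (?L {g})\<^sup>*"
        by (auto simp: subtree_simps)
      have "d \<noteq> f"
      proof
        assume "d = f"
        have "(src Y d, tgt Y d) \<in> ?L {g}" using link_edge[of d Y "{g}"] d by auto
        hence "(x, tgt Y d) \<in> (?L {g})\<^sup>*" using d(4) by (meson rtrancl.rtrancl_into_rtrancl)
        hence "(x,z) \<in> (?L {g})\<^sup>*" using d(4) z \<open>d = f\<close> by auto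
        thus False using notK by contradiction
      qed
      have d2: "(x, src Y d) \<in> (?L {g,f})\<^sup>*" using c1 d(4) .
      have "(z, src Y d) \<in> (?L {f})\<^sup>*" using c2 d2 .
      moreover have "(x, src Y d) \<in> (ulink ?Y1 {g})\<^sup>*" using c3 d2 .
      ultimately show "d \<in> edges (subtree ?Y1 g x)" using d \<open>d \<noteq> f\<close> by (simp add: subtree_simps)
    qed
  qed
  show ?thesis
    by (rule stree.equality) (simp_all only: V Ed subtree_simps(3-7) subtree_more)
qed

lemma root_out:
  assumes "z \<in> verts Y"
  shows "{d \<in> edges (subtree Y f z). src (subtree Y f z) d = start (subtree Y f z)}
       = {d \<in> edges Y. d \<noteq> f \<and> src Y d = z}"
  using assms by (auto simp: subtree_simps)

lemma root_in:
  assumes Y: "is_tree Y" and z: "z \<in> verts Y"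
  shows "{d \<in> edges (subtree Y f z). tgt (subtree Y f z) d = start (subtree Y f z)}
       = {d \<in> edges Y. d \<noteq> f \<and> tgt Y d = z}"
proof
  show "{d \<in> edges (subtree Y f z). tgt (subtree Y f z) d = start (subtree Y f z)}
       \<subseteq> {d \<in> edges Y. d \<noteq> f \<and> tgt Y d = z}" by (auto simp: subtree_simps)
  show "{d \<in> edges Y. d \<noteq> f \<and> tgt Y d = z}
    \<subseteq> {d \<in> edges (subtree Y f z). tgt (subtree Y f z) d = start (subtree Y f z)}"
  proof
    fix d assume "d \<in> {d \<in> edges Y. d \<noteq> f \<and> tgt Y d = z}"
    hence d: "d \<in> edges Y" "d \<noteq> f" "tgt Y d = z" by auto
    have "(tgt Y d, src Y d) \<in> ulink Y {f}" using link_edge[of d Y "{f}"] d by auto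
    hence "(z, src Y d) \<in> (ulink Y {f})\<^sup>*" using d(3) by auto
    moreover have "src Y d \<in> verts Y" using tree_D(3)[OF Y d(1)] .
    ultimately show "d \<in> {d \<in> edges (subtree Y f z). tgt (subtree Y f z) d = start (subtree Y f z)}"
      using d by (simp add: subtree_simps)
  qed
qed

lemma sub_unfold:
  assumes Y: "is_tree Y" and f: "f \<in> edges Y" and z: "z = src Y f \<or> z = tgt Y f"
  shows "tau chi (subtree Y f z) = set_prod (Fo chi Y) {d \<in> edges Y. d \<noteq> f \<and> src Y d = z}
                                * set_prod (Fi chi Y) {d \<in> edges Y. d \<noteq> f \<and> tgt Y d = z}"
proof -
  have zv: "z \<in> verts Y" using z tree_D(3,4)[OF Y f] by auto
  have finY: "finite (edges Y)" using tree_D(2)[OF Y] .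
  have fin: "finite (edges (subtree Y f z))" using subtree_card[OF finY f] by blast
  have fin1: "finite {d \<in> edges Y. d \<noteq> f \<and> src Y d = z}" using finY by simp
  have fin2: "finite {d \<in> edges Y. d \<noteq> f \<and> tgt Y d = z}" using finY by simp
  have "tau chi (subtree Y f z) = set_prod (Fo chi (subtree Y f z)) {d \<in> edges Y. d \<noteq> f \<and> src Y d = z}
                                * set_prod (Fi chi (subtree Y f z)) {d \<in> edges Y. d \<noteq> f \<and> tgt Y d = z}"
    using tau_unfold[OF fin, of chi] root_out[OF zv, of f] root_in[OF Y zv, of f] by simp
  also have "... = set_prod (Fo chi Y) {d \<in> edges Y. d \<noteq> f \<and> src Y d = z}
                                * set_prod (Fi chi Y) {d \<in> edges Y. d \<noteq> f \<and> tgt Y d = z}"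
  proof (rule arg_cong2[where f="(*)"])
    show "set_prod (Fo chi (subtree Y f z)) {d \<in> edges Y. d \<noteq> f \<and> src Y d = z}
        = set_prod (Fo chi Y) {d \<in> edges Y. d \<noteq> f \<and> src Y d = z}"
    proof (rule set_prod_cong[OF fin1])
      fix d assume "d \<in> {d \<in> edges Y. d \<noteq> f \<and> src Y d = z}"
      hence d: "d \<in> edges Y" "d \<noteq> f" "src Y d = z" by auto
      have "subtree (subtree Y f z) d (tgt Y d) = subtree Y d (tgt Y d)"
        by (rule SS[OF Y f d(1) d(2) z]) (use d(3) in auto)
      thus "Fo chi (subtree Y f z) d = Fo chi Y d" by (simp add: Fo_def subtree_simps)
    qed
    show "set_prod (Fi chi (subtree Y f z)) {d \<in> edges Y. d \<noteq> f \<and> tgt Y d = z}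
        = set_prod (Fi chi Y) {d \<in> edges Y. d \<noteq> f \<and> tgt Y d = z}"
    proof (rule set_prod_cong[OF fin2])
      fix d assume "d \<in> {d \<in> edges Y. d \<noteq> f \<and> tgt Y d = z}"
      hence d: "d \<in> edges Y" "d \<noteq> f" "tgt Y d = z" by auto
      have "subtree (subtree Y f z) d (src Y d) = subtree Y d (src Y d)"
        by (rule SS[OF Y f d(1) d(2) z]) (use d(3) in auto)
      thus "Fi chi (subtree Y f z) d = Fi chi Y d" by (simp add: Fi_def subtree_simps)
    qed
  qed
  finally show ?thesis .
qed



lemma comm_idem: "(e::'m::adequate_monoid) * e = e \<Longrightarrow> f * f = f \<Longrightarrow> e * f = f * e"
  by (rule idem_commute)

lemma alg_out:
  fixes s t X a :: "'m::adequate_monoid"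
  assumes s: "s * s = s" and t: "t * t = t" and X: "X * X = X"
    and T: "T = star_idem (s * a) * t" and TX: "T * X = T"
  shows "(plus_idem (a * t) * s) * plus_idem (a * X) = plus_idem (a * t) * s"
proof -
  let ?u = "plus_idem (a * T)"
  have "s * ?u = plus_idem (s * (a * T))" using P2[OF s] by simp
  also have "s * (a * T) = ((s * a) * star_idem (s * a)) * t" using T by (simp add: mult.assoc)
  also have "... = s * (a * t)" using S1[of "s*a"] by (simp add: mult.assoc)
  finally have su: "s * ?u = s * plus_idem (a * t)" using P2[OF s] by simp
  have cs: "s * plus_idem (a * t) = plus_idem (a * t) * s" using comm_idem[OF s plus_idem_idem] .
  have Pu: "(plus_idem (a * t) * s) * ?u = plus_idem (a * t) * s"
  proof -
    have "(plus_idem (a * t) * s) * ?u = plus_idem (a * t) * (s * ?u)" by (simp add: mult.assoc)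
    also have "... = plus_idem (a * t) * (plus_idem (a * t) * s)" using su cs by simp
    also have "... = plus_idem (a * t) * s" using plus_idem_idem[of "a*t"] by (simp add: mult.assoc[symmetric])
    finally show ?thesis .
  qed
  have Ti: "T * T = T" unfolding T
    by (rule idem_prod[OF star_idem_idem t comm_idem[OF star_idem_idem t]])
  have "X * T = T" using comm_idem[OF Ti X] TX by simp
  hence "a * T = (a * X) * T" by (simp add: mult.assoc)
  hence uX: "?u * plus_idem (a * X) = ?u" using P3[of "a*X" T] by simp
  have "(plus_idem (a * t) * s) * plus_idem (a * X) = ((plus_idem (a * t) * s) * ?u) * plus_idem (a * X)"
    using Pu by simp
  also have "... = (plus_idem (a * t) * s) * ?u" using uX by (simp add: mult.assoc)
  also have "... = plus_idem (a * t) * s" using Pu .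
  finally show ?thesis .
qed

lemma alg_in:
  fixes s t X a :: "'m::adequate_monoid"
  assumes s: "s * s = s" and t: "t * t = t" and X: "X * X = X"
    and T: "T = plus_idem (a * s) * t" and TX: "T * X = T"
  shows "(star_idem (t * a) * s) * star_idem (X * a) = star_idem (t * a) * s"
proof -
  let ?u = "star_idem (T * a)"
  have "?u * s = star_idem ((T * a) * s)" using S2[OF s] by simp
  also have "(T * a) * s = (plus_idem (a * s) * t) * (a * s)" using T by (simp add: mult.assoc)
  also have "... = (t * plus_idem (a * s)) * (a * s)" using comm_idem[OF plus_idem_idem t] by simp
  also have "... = (t * a) * s" using P1[of "a*s"] by (simp add: mult.assoc)
  finally have us: "?u * s = star_idem (t * a) * s" using S2[OF s] by simp
  have cs: "s * ?u = ?u * s" using comm_idem[OF s star_idem_idem] .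
  have Pu: "(star_idem (t * a) * s) * ?u = star_idem (t * a) * s"
  proof -
    have "(star_idem (t * a) * s) * ?u = star_idem (t * a) * (?u * s)" using cs by (simp add: mult.assoc)
    also have "... = star_idem (t * a) * (star_idem (t * a) * s)" using us by simp
    also have "... = star_idem (t * a) * s" using star_idem_idem[of "t*a"] by (simp add: mult.assoc[symmetric])
    finally show ?thesis .
  qed
  have "T * (X * a) = T * a" using TX by (simp add: mult.assoc[symmetric])
  hence uX: "?u * star_idem (X * a) = ?u" using S3[of T "X*a"] by simp
  have "(star_idem (t * a) * s) * star_idem (X * a) = ((star_idem (t * a) * s) * ?u) * star_idem (X * a)"
    using Pu by simp
  also have "... = (star_idem (t * a) * s) * ?u" using uX by (simp add: mult.assoc)
  also have "... = star_idem (t * a) * s" using Pu .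
  finally show ?thesis .
qed

lemma Fo_set_idem: "set_prod (Fo chi Y) S * set_prod (Fo chi Y) S = set_prod (Fo chi Y) S"
  by (rule set_prod_idem) (rule Fo_idem)
lemma Fi_set_idem: "set_prod (Fi chi Y) S * set_prod (Fi chi Y) S = set_prod (Fi chi Y) S"
  by (rule set_prod_idem) (rule Fi_idem)

lemma Yout:
  assumes Y: "is_tree Y" and f: "f \<in> edges Y" and v: "src Y f = start Y"
  shows "tau chi Y = plus_idem (chi (lab Y f) * tau chi (subtree Y f (tgt Y f))) * tau chi (subtree Y f (src Y f))"
    "tau chi (Y\<lparr>start := tgt Y f, fin := tgt Y f\<rparr>)
       = star_idem (tau chi (subtree Y f (src Y f)) * chi (lab Y f)) * tau chi (subtree Y f (tgt Y f))"
proof -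
  let ?v = "src Y f" and ?w = "tgt Y f"
  have finY: "finite (edges Y)" using tree_D(2)[OF Y] .
  have vw: "?v \<noteq> ?w" using bridge(3)[OF Y f] .
  let ?O' = "{d \<in> edges Y. d \<noteq> f \<and> src Y d = ?v}"
  let ?I' = "{d \<in> edges Y. d \<noteq> f \<and> tgt Y d = ?v}"
  let ?Ow = "{d \<in> edges Y. d \<noteq> f \<and> src Y d = ?w}"
  let ?Iw = "{d \<in> edges Y. d \<noteq> f \<and> tgt Y d = ?w}"
  have O: "{d \<in> edges Y. src Y d = start Y} = insert f ?O'" using f v by auto
  have I: "{d \<in> edges Y. tgt Y d = start Y} = ?I'" using vw v by auto
  have Ow: "{d \<in> edges Y. src Y d = ?w} = ?Ow" using vw by auto
  have Iw: "{d \<in> edges Y. tgt Y d = ?w} = insert f ?Iw" using f by auto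
  have s: "tau chi (subtree Y f ?v) = set_prod (Fo chi Y) ?O' * set_prod (Fi chi Y) ?I'"
    by (rule sub_unfold[OF Y f]) simp
  have t: "tau chi (subtree Y f ?w) = set_prod (Fo chi Y) ?Ow * set_prod (Fi chi Y) ?Iw"
    by (rule sub_unfold[OF Y f]) simp
  have "tau chi Y = set_prod (Fo chi Y) (insert f ?O') * set_prod (Fi chi Y) ?I'"
    using tau_unfold[OF finY, of chi] O I by simp
  also have "set_prod (Fo chi Y) (insert f ?O') = Fo chi Y f * set_prod (Fo chi Y) ?O'"
    by (rule set_prod_insert) (use Fo_idem finY in auto)
  finally show "tau chi Y = plus_idem (chi (lab Y f) * tau chi (subtree Y f ?w)) * tau chi (subtree Y f ?v)"
    using s by (simp add: Fo_def mult.assoc)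
  have fw: "finite (edges (Y\<lparr>start := ?w, fin := ?w\<rparr>))" using finY by simp
  have "tau chi (Y\<lparr>start := ?w, fin := ?w\<rparr>) = set_prod (Fo chi Y) ?Ow * set_prod (Fi chi Y) (insert f ?Iw)"
    using tau_unfold[OF fw, of chi] Ow Iw by (simp add: Fo_reroot Fi_reroot)
  also have "set_prod (Fi chi Y) (insert f ?Iw) = Fi chi Y f * set_prod (Fi chi Y) ?Iw"
    by (rule set_prod_insert) (use Fi_idem finY in auto)
  also have "set_prod (Fo chi Y) ?Ow * (Fi chi Y f * set_prod (Fi chi Y) ?Iw)
      = Fi chi Y f * (set_prod (Fo chi Y) ?Ow * set_prod (Fi chi Y) ?Iw)"
  proof -
    have "set_prod (Fo chi Y) ?Ow * Fi chi Y f = Fi chi Y f * set_prod (Fo chi Y) ?Ow"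
      by (rule comm_idem[OF Fo_set_idem Fi_idem])
    thus ?thesis by (simp add: mult.assoc[symmetric])
  qed
  finally show "tau chi (Y\<lparr>start := ?w, fin := ?w\<rparr>)
       = star_idem (tau chi (subtree Y f ?v) * chi (lab Y f)) * tau chi (subtree Y f ?w)"
    using t by (simp add: Fi_def)
qed

lemma Yin:
  assumes Y: "is_tree Y" and f: "f \<in> edges Y" and v: "tgt Y f = start Y"
  shows "tau chi Y = star_idem (tau chi (subtree Y f (src Y f)) * chi (lab Y f)) * tau chi (subtree Y f (tgt Y f))"
    "tau chi (Y\<lparr>start := src Y f, fin := src Y f\<rparr>)
       = plus_idem (chi (lab Y f) * tau chi (subtree Y f (tgt Y f))) * tau chi (subtree Y f (src Y f))"
proof -
  let ?v = "tgt Y f" and ?w = "src Y f"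
  have finY: "finite (edges Y)" using tree_D(2)[OF Y] .
  have vw: "?v \<noteq> ?w" using bridge(3)[OF Y f] by simp
  let ?O' = "{d \<in> edges Y. d \<noteq> f \<and> src Y d = ?v}"
  let ?I' = "{d \<in> edges Y. d \<noteq> f \<and> tgt Y d = ?v}"
  let ?Ow = "{d \<in> edges Y. d \<noteq> f \<and> src Y d = ?w}"
  let ?Iw = "{d \<in> edges Y. d \<noteq> f \<and> tgt Y d = ?w}"
  have O: "{d \<in> edges Y. src Y d = start Y} = ?O'" using vw v by auto
  have I: "{d \<in> edges Y. tgt Y d = start Y} = insert f ?I'" using f v by auto
  have Ow: "{d \<in> edges Y. src Y d = ?w} = insert f ?Ow" using f by auto
  have Iw: "{d \<in> edges Y. tgt Y d = ?w} = ?Iw" using vw by auto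
  have s: "tau chi (subtree Y f ?v) = set_prod (Fo chi Y) ?O' * set_prod (Fi chi Y) ?I'"
    by (rule sub_unfold[OF Y f]) simp
  have t: "tau chi (subtree Y f ?w) = set_prod (Fo chi Y) ?Ow * set_prod (Fi chi Y) ?Iw"
    by (rule sub_unfold[OF Y f]) simp
  have "tau chi Y = set_prod (Fo chi Y) ?O' * set_prod (Fi chi Y) (insert f ?I')"
    using tau_unfold[OF finY, of chi] O I by simp
  also have "set_prod (Fi chi Y) (insert f ?I') = Fi chi Y f * set_prod (Fi chi Y) ?I'"
    by (rule set_prod_insert) (use Fi_idem finY in auto)
  also have "set_prod (Fo chi Y) ?O' * (Fi chi Y f * set_prod (Fi chi Y) ?I')
      = Fi chi Y f * (set_prod (Fo chi Y) ?O' * set_prod (Fi chi Y) ?I')"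
  proof -
    have "set_prod (Fo chi Y) ?O' * Fi chi Y f = Fi chi Y f * set_prod (Fo chi Y) ?O'"
      by (rule comm_idem[OF Fo_set_idem Fi_idem])
    thus ?thesis by (simp add: mult.assoc[symmetric])
  qed
  finally show "tau chi Y = star_idem (tau chi (subtree Y f ?w) * chi (lab Y f)) * tau chi (subtree Y f ?v)"
    using s by (simp add: Fi_def)
  have fw: "finite (edges (Y\<lparr>start := ?w, fin := ?w\<rparr>))" using finY by simp
  have "tau chi (Y\<lparr>start := ?w, fin := ?w\<rparr>) = set_prod (Fo chi Y) (insert f ?Ow) * set_prod (Fi chi Y) ?Iw"
    using tau_unfold[OF fw, of chi] Ow Iw by (simp add: Fo_reroot Fi_reroot)
  also have "set_prod (Fo chi Y) (insert f ?Ow) = Fo chi Y f * set_prod (Fo chi Y) ?Ow"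
    by (rule set_prod_insert) (use Fo_idem finY in auto)
  finally show "tau chi (Y\<lparr>start := ?w, fin := ?w\<rparr>)
       = plus_idem (chi (lab Y f) * tau chi (subtree Y f ?v)) * tau chi (subtree Y f ?w)"
    using t by (simp add: Fo_def mult.assoc)
qed



lemma main_ind:
  fixes chi :: "'s \<Rightarrow> 'm::adequate_monoid"
    and mv :: "'v1 \<Rightarrow> 'v2" and me :: "'e1 \<Rightarrow> 'e2"
  shows "\<forall>(X :: ('v1, 'e1, 's) stree) (Y :: ('v2, 'e2, 's) stree). card (edges X) = n \<longrightarrow>
    idempotent_tree X \<longrightarrow> idempotent_tree Y \<longrightarrow> tree_morphism mv me X Y \<longrightarrow>
    tau chi Y * tau chi X = tau chi Y"
proof (induction n rule: less_induct)
  case (less n)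
  show ?case
  proof (intro allI impI)
    fix X :: "('v1, 'e1, 's) stree" and Y :: "('v2, 'e2, 's) stree"
    assume cX: "card (edges X) = n" and iX: "idempotent_tree X" and iY: "idempotent_tree Y"
      and M: "tree_morphism mv me X Y"
    have X: "is_tree X" and sfX: "start X = fin X" using iX by (auto simp: idempotent_tree_def)
    have Y: "is_tree Y" using iY by (auto simp: idempotent_tree_def)
    have finX: "finite (edges X)" using tree_D(2)[OF X] .
    have m2: "\<forall>e\<in>edges X. me e \<in> edges Y \<and> src Y (me e) = mv (src X e) \<and> tgt Y (me e) = mv (tgt X e)
          \<and> lab Y (me e) = lab X e" and mst: "mv (start X) = start Y"
      using M unfolding tree_morphism_def by blast+
    have IH: "tau chi Yw * tau chi (subtree X e u) = tau chi Yw"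
      if e: "e \<in> edges X" and u: "u \<in> verts X" and Yw: "Yw = Y\<lparr>start := mv u, fin := mv u\<rparr>" for e u Yw
    proof -
      have c: "card (edges (subtree X e u)) < n" using subtree_card[OF finX e] cX by simp
      have "idempotent_tree (subtree X e u)" by (rule subtree_tree[OF X e u])
      moreover have "idempotent_tree Yw"
      proof -
        have "mv u \<in> verts Y" using M u unfolding tree_morphism_def by blast
        thus ?thesis unfolding Yw by (rule reroot_tree[OF Y])
      qed
      moreover have "tree_morphism mv me (subtree X e u) Yw" unfolding Yw by (rule morph_sub[OF M u])
      ultimately show ?thesis using less.IH[OF c] by blast
    qed
    have A: "tau chi Y * Fo chi X e = tau chi Y" if e: "e \<in> {d \<in> edges X. src X d = start X}" for e
    proof -
      have e1: "e \<in> edges X" and e2: "src X e = start X" using e by auto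
      let ?f = "me e"
      have f: "?f \<in> edges Y" "src Y ?f = start Y" "tgt Y ?f = mv (tgt X e)" "lab Y ?f = lab X e"
        using m2 e1 e2 mst by auto
      have u: "tgt X e \<in> verts X" using tree_D(4)[OF X e1] .
      have ih: "tau chi (Y\<lparr>start := tgt Y ?f, fin := tgt Y ?f\<rparr>) * tau chi (subtree X e (tgt X e))
             = tau chi (Y\<lparr>start := tgt Y ?f, fin := tgt Y ?f\<rparr>)"
        using IH[OF e1 u] f(3) by simp
      have r: "(plus_idem (chi (lab Y ?f) * tau chi (subtree Y ?f (tgt Y ?f))) * tau chi (subtree Y ?f (src Y ?f)))
             * plus_idem (chi (lab Y ?f) * tau chi (subtree X e (tgt X e)))
           = plus_idem (chi (lab Y ?f) * tau chi (subtree Y ?f (tgt Y ?f))) * tau chi (subtree Y ?f (src Y ?f))"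
        by (rule alg_out[OF tau_idem tau_idem tau_idem Yout(2)[OF Y f(1) f(2)] ih])
      show ?thesis using r Yout(1)[OF Y f(1) f(2), of chi] f(4) by (simp add: Fo_def)
    qed
    have B: "tau chi Y * Fi chi X e = tau chi Y" if e: "e \<in> {d \<in> edges X. tgt X d = start X}" for e
    proof -
      have e1: "e \<in> edges X" and e2: "tgt X e = start X" using e by auto
      let ?f = "me e"
      have f: "?f \<in> edges Y" "tgt Y ?f = start Y" "src Y ?f = mv (src X e)" "lab Y ?f = lab X e"
        using m2 e1 e2 mst by auto
      have u: "src X e \<in> verts X" using tree_D(3)[OF X e1] .
      have ih: "tau chi (Y\<lparr>start := src Y ?f, fin := src Y ?f\<rparr>) * tau chi (subtree X e (src X e))
             = tau chi (Y\<lparr>start := src Y ?f, fin := src Y ?f\<rparr>)"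
        using IH[OF e1 u] f(3) by simp
      have r: "(star_idem (tau chi (subtree Y ?f (src Y ?f)) * chi (lab Y ?f)) * tau chi (subtree Y ?f (tgt Y ?f)))
             * star_idem (tau chi (subtree X e (src X e)) * chi (lab Y ?f))
           = star_idem (tau chi (subtree Y ?f (src Y ?f)) * chi (lab Y ?f)) * tau chi (subtree Y ?f (tgt Y ?f))"
        by (rule alg_in[OF tau_idem tau_idem tau_idem Yin(2)[OF Y f(1) f(2)] ih])
      show ?thesis using r Yin(1)[OF Y f(1) f(2), of chi] f(4) by (simp add: Fi_def)
    qed
    have fin1: "finite {d \<in> edges X. src X d = start X}" using finX by simp
    have fin2: "finite {d \<in> edges X. tgt X d = start X}" using finX by simp
    have "tau chi Y * tau chi X = (tau chi Y * set_prod (Fo chi X) {d \<in> edges X. src X d = start X})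
              * set_prod (Fi chi X) {d \<in> edges X. tgt X d = start X}"
      using tau_unfold[OF finX, of chi] by (simp add: mult.assoc)
    also have "tau chi Y * set_prod (Fo chi X) {d \<in> edges X. src X d = start X} = tau chi Y"
      by (rule set_prod_absorb[OF fin1 A])
    also have "tau chi Y * set_prod (Fi chi X) {d \<in> edges X. tgt X d = start X} = tau chi Y"
      by (rule set_prod_absorb[OF fin2 B])
    finally show "tau chi Y * tau chi X = tau chi Y" .
  qed
qed

theorem lemma5p8:
  fixes chi :: "'s \<Rightarrow> 'm::adequate_monoid"
    and X :: "('v1, 'e1, 's) stree" and Y :: "('v2, 'e2, 's) stree"
    and mv :: "'v1 \<Rightarrow> 'v2" and me :: "'e1 \<Rightarrow> 'e2"
  assumes "idempotent_tree X" and "idempotent_tree Y"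
    and "tree_morphism mv me X Y"
  shows "tau chi Y * tau chi X = tau chi Y"
  using main_ind[where n="card (edges X)" and chi=chi and mv=mv and me=me] assms by blast

end
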